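(* Let $n\ge2$, $\alpha_1>0$, $\alpha_2>\alpha_3>0$, $\omega=e^{2\pi j/n}$ ($j=\sqrt{-1}$). Then $(F_n^*\otimes I_2)^{-1}\hat A\,(F_n^*\otimes I_2)=\operatorname{diag}(D_1,\dots,D_n)$ with $$D_i=A_1+A_2\,\omega^{(n-1)(i-1)}=\begin{bmatrix}0&-1+\omega^{(n-1)(i-1)}\\ \alpha_1&-\alpha_2+\alpha_3\omega^{(n-1)(i-1)}\end{bmatrix},\quad i=1,\dots,n.$$ Consequently the eigenvalues of $\hat A$ are exactly the roots $\lambda$ of the equations $$\lambda^2+\big(\alpha_2-\alpha_3\omega^{(n-1)(i-1)}\big)\lambda+\alpha_1\big(1-\omega^{(n-1)(i-1)}\big)=0,\qquad i=1,\dots,n.$$ Moreover, if $\alpha_1-\alpha_2\alpha_3+\alpha_3^2\neq0$, then for $i\neq k$ the matrices $D_i$ and $D_k$ have no common eigenvalue.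
   Context: $A_1=\begin{bmatrix}0&-1\\ \alpha_1&-\alpha_2\end{bmatrix}$, $A_2=\begin{bmatrix}0&1\\0&\alpha_3\end{bmatrix}$. $\hat A\in\mathbb R^{2n\times2n}$ is the block circulant $n\times n$ block matrix (blocks $2\times2$) with block $(1,1)=A_1$, block $(1,n)=A_2$, and for $i=2,\dots,n$ block $(i,i)=A_1$, block $(i,i-1)=A_2$; other blocks zero. $F_n$ is the unitary Fourier matrix defined by $F_n^*=\frac1{\sqrt n}\big[\omega^{(r-1)(c-1)}\big]_{r,c=1}^n$ with $\omega=e^{2\pi j/n}$, where $F_n^*$ is the conjugate transpose of $F_n$; $\otimes$ is the Kronecker product. *)

theory Defs
  imports "Jordan_Normal_Form.Char_Poly"
begin

(* Indices are 0-based throughout: block index i (0 \<le> i < n) corresponds to the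
   paper's block index i+1. Matrices are complex (real data embedded via of_real). *)

definition A1 :: "real \<Rightarrow> real \<Rightarrow> complex mat" where
  "A1 a1 a2 = mat_of_rows_list 2 [[0, -1], [of_real a1, - of_real a2]]"

definition A2 :: "real \<Rightarrow> complex mat" where
  "A2 a3 = mat_of_rows_list 2 [[0, 1], [0, of_real a3]]"

definition Ahat_block :: "nat \<Rightarrow> real \<Rightarrow> real \<Rightarrow> real \<Rightarrow> nat \<Rightarrow> nat \<Rightarrow> complex mat" where
  "Ahat_block n a1 a2 a3 r c =
     (if r = c then A1 a1 a2
      else if (r = 0 \<and> c = n - 1) \<or> (r \<ge> 1 \<and> c = r - 1) then A2 a3
      else 0\<^sub>m 2 2)"

definition Ahat :: "nat \<Rightarrow> real \<Rightarrow> real \<Rightarrow> real \<Rightarrow> complex mat" where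
  "Ahat n a1 a2 a3 = mat (2*n) (2*n)
     (\<lambda>(p,q). Ahat_block n a1 a2 a3 (p div 2) (q div 2) $$ (p mod 2, q mod 2))"

definition omega :: "nat \<Rightarrow> complex" where
  "omega n = exp (2 * complex_of_real pi * \<i> / of_nat n)"

(* F_n^* = 1/sqrt n [omega^((r-1)(c-1))], written 0-based *)
definition Fstar :: "nat \<Rightarrow> complex mat" where
  "Fstar n = mat n n (\<lambda>(r,c). omega n ^ (r*c) / complex_of_real (sqrt (real n)))"

definition kron :: "'a :: times mat \<Rightarrow> 'a mat \<Rightarrow> 'a mat" where
  "kron A B = mat (dim_row A * dim_row B) (dim_col A * dim_col B)
     (\<lambda>(i,j). A $$ (i div dim_row B, j div dim_col B) * B $$ (i mod dim_row B, j mod dim_col B))"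

definition block_diag2 :: "nat \<Rightarrow> (nat \<Rightarrow> 'a :: zero mat) \<Rightarrow> 'a mat" where
  "block_diag2 n D = mat (2*n) (2*n)
     (\<lambda>(p,q). if p div 2 = q div 2 then D (p div 2) $$ (p mod 2, q mod 2) else 0)"

definition Dblk :: "nat \<Rightarrow> real \<Rightarrow> real \<Rightarrow> real \<Rightarrow> nat \<Rightarrow> complex mat" where
  "Dblk n a1 a2 a3 i = A1 a1 a2 + (omega n ^ ((n-1)*i)) \<cdot>\<^sub>m A2 a3"

end

theory Submission
  imports Defs
begin

lemma omega_n: "n > 0 \<Longrightarrow> omega n ^ n = 1"
proof -
  assume "n > 0"
  have "omega n ^ n = exp (of_nat n * (2 * complex_of_real pi * \<i> / of_nat n))"
    unfolding omega_def by (rule exp_of_nat_mult[symmetric])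
  also have "of_nat n * (2 * complex_of_real pi * \<i> / of_nat n) = 2 * complex_of_real pi * \<i>"
    using \<open>n>0\<close> by simp
  finally show ?thesis by simp
qed

lemma omega_pow_mod: "n > 0 \<Longrightarrow> omega n ^ m = omega n ^ (m mod n)"
proof -
  assume "n>0"
  have "omega n ^ m = omega n ^ (n * (m div n) + m mod n)" by simp
  also have "\<dots> = (omega n ^ n) ^ (m div n) * omega n ^ (m mod n)"
    by (simp only: power_add power_mult)
  finally have "omega n ^ m = (omega n ^ n) ^ (m div n) * omega n ^ (m mod n)" .
  thus ?thesis using omega_n[OF \<open>n>0\<close>] by simp
qed

lemma omega_cis: "n > 0 \<Longrightarrow> omega n ^ m = cis (2*pi*m/n)"
proof -
  assume "n>0"
  have "omega n = cis (2*pi/n)" unfolding omega_def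
    by (simp add: cis_conv_exp mult_ac)
  thus ?thesis by (simp add: DeMoivre mult_ac)
qed

lemma omega_ne1: "0 < m \<Longrightarrow> m < n \<Longrightarrow> omega n ^ m \<noteq> 1"
proof
  assume m: "0 < m" "m < n" and e: "omega n ^ m = 1"
  have "cos (2*pi*m/n) = Re (cis (2*pi*m/n))" by simp
  also have "cis (2*pi*m/n) = 1" using omega_cis[of n m] e m by simp
  finally have "cos (2*pi*m/n) = 1" by simp
  then obtain k :: nat where k: "2*pi*m/n = k*2*pi \<or> 2*pi*m/n = -(k*2*pi)"
    using cos_one_2pi[of "2*pi*m/n"] by auto
  have pos: "2*pi*m/n > 0" using m by simp
  have lt: "2*pi*m/n < 2*pi" using m by (simp add: field_simps)
  from k show False
  proof
    assume h: "2*pi*m/n = k*2*pi"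
    hence "k > 0" using pos by (cases k) auto
    hence "real (k * 2) * pi \<ge> 2*pi" by simp
    thus False using h lt by (simp add: mult_ac)
  next
    assume "2*pi*m/n = -(k*2*pi)" thus False using pos by (smt (verit) of_nat_0_le_iff mult_nonneg_nonneg pi_ge_zero)
  qed
qed

lemma sum_split2: fixes n :: nat and f :: "nat \<Rightarrow> 'a::comm_monoid_add" shows "(\<Sum>s = 0..<2*n. f s) = (\<Sum>c<n. f (2*c) + f (2*c+1))"
proof (induction n)
  case 0 then show ?case by simp
next
  case (Suc n)
  have "{0..<2*Suc n} = insert (2*n+1) (insert (2*n) {0..<2*n})" by auto
  hence "(\<Sum>s = 0..<2*Suc n. f s) = f (2*n+1) + (f (2*n) + (\<Sum>s = 0..<2*n. f s))" by simp
  then show ?case using Suc by (simp add: ac_simps)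
qed

lemma kron_carrier: "F \<in> carrier_mat n n \<Longrightarrow> kron F (1\<^sub>m 2) \<in> carrier_mat (2*n) (2*n)"
  unfolding kron_def by auto

lemma kron_entry: fixes F :: "'a::semiring_1 mat" assumes "F \<in> carrier_mat n n" "p < 2*n" "q < 2*n"
  shows "kron F (1\<^sub>m 2) $$ (p,q) = (if p mod 2 = q mod 2 then F $$ (p div 2, q div 2) else 0)"
  using assms unfolding kron_def by (auto simp: mult.commute)

lemma mult_kron_right: fixes M F :: "'a::semiring_1 mat" assumes M: "M \<in> carrier_mat (2*n) (2*n)" and F: "F \<in> carrier_mat n n"
  and pq: "p < 2*n" "q < 2*n"
  shows "(M * kron F (1\<^sub>m 2)) $$ (p,q) = (\<Sum>c<n. M $$ (p, 2*c + q mod 2) * F $$ (c, q div 2))"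
proof -
  have "(M * kron F (1\<^sub>m 2)) $$ (p,q) = (\<Sum>s = 0..<2*n. M $$ (p,s) * kron F (1\<^sub>m 2) $$ (s,q))"
    using M F pq kron_carrier[OF F] by (simp add: scalar_prod_def)
  also have "\<dots> = (\<Sum>c<n. M $$ (p, 2*c) * kron F (1\<^sub>m 2) $$ (2*c,q) + M $$ (p, 2*c+1) * kron F (1\<^sub>m 2) $$ (2*c+1,q))"
    by (rule sum_split2)
  also have "\<dots> = (\<Sum>c<n. M $$ (p, 2*c + q mod 2) * F $$ (c, q div 2))"
  proof (rule sum.cong[OF refl])
    fix c assume "c \<in> {..<n}"
    hence c: "2*c < 2*n" "2*c+1 < 2*n" by auto
    show "M $$ (p, 2*c) * kron F (1\<^sub>m 2) $$ (2*c,q) + M $$ (p, 2*c+1) * kron F (1\<^sub>m 2) $$ (2*c+1,q)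
      = M $$ (p, 2*c + q mod 2) * F $$ (c, q div 2)"
    proof -
      have e0: "kron F (1\<^sub>m 2) $$ (2*c,q) = (if q mod 2 = 0 then F $$ (c, q div 2) else 0)"
        using kron_entry[OF F c(1) pq(2)] by simp
      have e1: "kron F (1\<^sub>m 2) $$ (2*c+1,q) = (if q mod 2 = 1 then F $$ (c, q div 2) else 0)"
        using kron_entry[OF F c(2) pq(2)] by simp
      have "q mod 2 = 0 \<or> q mod 2 = 1" by arith
      thus ?thesis unfolding e0 e1 by (elim disjE) simp_all
    qed
  qed
  finally show ?thesis .
qed

lemma mult_kron_left: fixes M F :: "'a::semiring_1 mat" assumes M: "M \<in> carrier_mat (2*n) (2*n)" and F: "F \<in> carrier_mat n n"
  and pq: "p < 2*n" "q < 2*n"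
  shows "(kron F (1\<^sub>m 2) * M) $$ (p,q) = (\<Sum>c<n. F $$ (p div 2, c) * M $$ (2*c + p mod 2, q))"
proof -
  have "(kron F (1\<^sub>m 2) * M) $$ (p,q) = (\<Sum>s = 0..<2*n. kron F (1\<^sub>m 2) $$ (p,s) * M $$ (s,q))"
    using M F pq kron_carrier[OF F] by (simp add: scalar_prod_def)
  also have "\<dots> = (\<Sum>c<n. kron F (1\<^sub>m 2) $$ (p,2*c) * M $$ (2*c,q) + kron F (1\<^sub>m 2) $$ (p,2*c+1) * M $$ (2*c+1,q))"
    by (rule sum_split2)
  also have "\<dots> = (\<Sum>c<n. F $$ (p div 2, c) * M $$ (2*c + p mod 2, q))"
  proof (rule sum.cong[OF refl])
    fix c assume "c \<in> {..<n}"
    hence c: "2*c < 2*n" "2*c+1 < 2*n" by auto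
    show "kron F (1\<^sub>m 2) $$ (p,2*c) * M $$ (2*c,q) + kron F (1\<^sub>m 2) $$ (p,2*c+1) * M $$ (2*c+1,q)
      = F $$ (p div 2, c) * M $$ (2*c + p mod 2, q)"
    proof -
      have e0: "kron F (1\<^sub>m 2) $$ (p,2*c) = (if p mod 2 = 0 then F $$ (p div 2, c) else 0)"
        using kron_entry[OF F pq(1) c(1)] by simp
      have e1: "kron F (1\<^sub>m 2) $$ (p,2*c+1) = (if p mod 2 = 1 then F $$ (p div 2, c) else 0)"
        using kron_entry[OF F pq(1) c(2)] by simp
      have "p mod 2 = 0 \<or> p mod 2 = 1" by arith
      thus ?thesis unfolding e0 e1 by (elim disjE) simp_all
    qed
  qed
  finally show ?thesis .
qed

lemma kron_mult: fixes F G :: "'a::semiring_1 mat" assumes F: "F \<in> carrier_mat n n" and G: "G \<in> carrier_mat n n"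
  shows "kron F (1\<^sub>m 2) * kron G (1\<^sub>m 2) = kron (F * G) (1\<^sub>m 2)"
proof (rule eq_matI)
  have FG: "F * G \<in> carrier_mat n n" using F G by simp
  show "dim_row (kron F (1\<^sub>m 2) * kron G (1\<^sub>m 2)) = dim_row (kron (F * G) (1\<^sub>m 2))"
    "dim_col (kron F (1\<^sub>m 2) * kron G (1\<^sub>m 2)) = dim_col (kron (F * G) (1\<^sub>m 2))"
    using kron_carrier[OF F] kron_carrier[OF G] kron_carrier[OF FG] by auto
  fix p q assume "p < dim_row (kron (F * G) (1\<^sub>m 2))" "q < dim_col (kron (F * G) (1\<^sub>m 2))"
  hence pq: "p < 2*n" "q < 2*n" using kron_carrier[OF FG] by auto
  have "(kron F (1\<^sub>m 2) * kron G (1\<^sub>m 2)) $$ (p,q) = (\<Sum>c<n. F $$ (p div 2, c) * kron G (1\<^sub>m 2) $$ (2*c + p mod 2, q))"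
    by (rule mult_kron_left[OF kron_carrier[OF G] F pq])
  also have "\<dots> = (\<Sum>c<n. F $$ (p div 2, c) * (if p mod 2 = q mod 2 then G $$ (c, q div 2) else 0))"
  proof (rule sum.cong[OF refl])
    fix c assume "c \<in> {..<n}"
    hence c: "2*c + p mod 2 < 2*n" by auto
    show "F $$ (p div 2, c) * kron G (1\<^sub>m 2) $$ (2*c + p mod 2, q) = F $$ (p div 2, c) * (if p mod 2 = q mod 2 then G $$ (c, q div 2) else 0)"
      using kron_entry[OF G c pq(2)] by simp
  qed
  also have "\<dots> = (if p mod 2 = q mod 2 then (F * G) $$ (p div 2, q div 2) else 0)"
    using F G pq by (auto simp: scalar_prod_def lessThan_atLeast0)
  also have "\<dots> = kron (F * G) (1\<^sub>m 2) $$ (p,q)"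
    using kron_entry[OF FG pq] by simp
  finally show "(kron F (1\<^sub>m 2) * kron G (1\<^sub>m 2)) $$ (p,q) = kron (F * G) (1\<^sub>m 2) $$ (p,q)" .
qed

lemma kron_one: "kron (1\<^sub>m n) (1\<^sub>m 2) = (1\<^sub>m (2*n) :: 'a::semiring_1 mat)"
proof (rule eq_matI)
  fix p q assume "p < dim_row (1\<^sub>m (2*n) :: 'a mat)" "q < dim_col (1\<^sub>m (2*n) :: 'a mat)"
  hence pq: "p < 2*n" "q < 2*n" by auto
  have "p = q \<longleftrightarrow> p div 2 = q div 2 \<and> p mod 2 = q mod 2"
    by (metis div_mult_mod_eq)
  thus "kron (1\<^sub>m n) (1\<^sub>m 2) $$ (p,q) = (1\<^sub>m (2*n) :: 'a mat) $$ (p,q)"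
    using kron_entry[of "1\<^sub>m n" n p q] pq by auto
qed (auto simp: kron_def)

lemma omega_geom: assumes "n > 0"
  shows "(\<Sum>k<n. (omega n ^ m) ^ k) = (if m mod n = 0 then of_nat n else 0)"
proof (cases "m mod n = 0")
  case True
  hence "omega n ^ m = 1" using omega_pow_mod[OF assms, of m] by simp
  then show ?thesis using True by simp
next
  case False
  hence ne: "omega n ^ m \<noteq> 1" using omega_pow_mod[OF assms, of m] omega_ne1[of "m mod n" n] assms by auto
  have "(omega n ^ m) ^ n = 1" by (metis omega_n[OF assms] power_mult power_mult_distrib mult.commute power_one)
  then show ?thesis using False ne by (simp add: geometric_sum)
qed

lemma mod_shift: fixes r n c :: nat assumes "r < n" "c < n" shows "(r + (n-1)*c) mod n = 0 \<longleftrightarrow> r = c"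
proof (cases "r \<ge> c")
  case True
  have a: "(n-1)*c = n*c - c" using diff_mult_distrib[of n 1 c] by simp
  have b: "c \<le> n*c" using assms by simp
  have "r + (n-1)*c = (r - c) + n*c" using True a b by linarith
  hence "(r + (n-1)*c) mod n = (r - c) mod n" by simp
  also have "\<dots> = r - c" using assms by simp
  finally show ?thesis using True by auto
next
  case False
  have a: "(n-1)*c = n*c - c" using diff_mult_distrib[of n 1 c] by simp
  have a2: "n*(c-1) = n*c - n" by (simp add: diff_mult_distrib2)
  have b: "n \<le> n*c" using False by simp
  have "r + (n-1)*c = (r + n - c) + n*(c-1)" using False assms a a2 b by linarith
  hence "(r + (n-1)*c) mod n = (r + n - c) mod n" by simp
  also have "\<dots> = r + n - c" using False assms by simp
  finally show ?thesis using False assms by simp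
qed

lemma pw1: "(omega n ^ (r + (n-1)*c)) ^ k = omega n ^ (r*k) * omega n ^ ((n-1)*k*c)"
proof -
  have "(r + (n-1)*c) * k = r*k + (n-1)*k*c" by (simp add: algebra_simps)
  thus ?thesis by (simp only: power_mult[symmetric] power_add[symmetric])
qed
lemma pw2: "(omega n ^ (c + (n-1)*r)) ^ k = omega n ^ ((n-1)*r*k) * omega n ^ (k*c)"
proof -
  have "(c + (n-1)*r) * k = (n-1)*r*k + k*c" by (simp add: algebra_simps)
  thus ?thesis by (simp only: power_mult[symmetric] power_add[symmetric])
qed
definition Finv :: "nat \<Rightarrow> complex mat" where
  "Finv n = mat n n (\<lambda>(r,c). omega n ^ ((n-1)*r*c) / complex_of_real (sqrt (real n)))"

lemma sqrt_sq: "complex_of_real (sqrt (real n)) * complex_of_real (sqrt (real n)) = of_nat n"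
  by (simp flip: of_real_mult)

lemma Fstar_carrier: "Fstar n \<in> carrier_mat n n" unfolding Fstar_def by auto
lemma Finv_carrier: "Finv n \<in> carrier_mat n n" unfolding Finv_def by auto

lemma unit_entry: assumes "n > 0" "r < n" "c < n"
  and e: "\<And>k. e k = (omega n ^ m) ^ k" and m: "m mod n = 0 \<longleftrightarrow> r = c"
  shows "(\<Sum>k<n. e k / complex_of_real (sqrt (real n)) / complex_of_real (sqrt (real n)))
    = (if r = c then 1 else 0)"
proof -
  have "(\<Sum>k<n. e k / complex_of_real (sqrt (real n)) / complex_of_real (sqrt (real n)))
     = (\<Sum>k<n. e k) / of_nat n"
    by (simp add: sum_divide_distrib[symmetric] divide_divide_eq_left sqrt_sq)
  also have "\<dots> = (if r = c then 1 else 0)"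
    unfolding e omega_geom[OF assms(1)] using m assms(1) by auto
  finally show ?thesis .
qed

lemma Fstar_Finv: assumes "n > 0" shows "Fstar n * Finv n = 1\<^sub>m n"
proof (rule eq_matI)
  fix r c assume "r < dim_row (1\<^sub>m n :: complex mat)" "c < dim_col (1\<^sub>m n :: complex mat)"
  hence rc: "r < n" "c < n" by auto
  have "(Fstar n * Finv n) $$ (r,c) = (\<Sum>k<n. omega n ^ (r*k) / complex_of_real (sqrt (real n)) *
      (omega n ^ ((n-1)*k*c) / complex_of_real (sqrt (real n))))"
    using rc by (simp add: Fstar_def Finv_def scalar_prod_def lessThan_atLeast0)
  also have "\<dots> = (\<Sum>k<n. (omega n ^ (r + (n-1)*c)) ^ k / complex_of_real (sqrt (real n)) / complex_of_real (sqrt (real n)))"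
    by (rule sum.cong[OF refl]) (subst pw1, simp)
  also have "\<dots> = (if r = c then 1 else 0)"
    by (rule unit_entry[OF assms rc refl mod_shift[OF rc]])
  finally show "(Fstar n * Finv n) $$ (r,c) = 1\<^sub>m n $$ (r,c)" using rc by simp
qed (auto simp: Fstar_def Finv_def)

lemma Finv_Fstar: assumes "n > 0" shows "Finv n * Fstar n = 1\<^sub>m n"
proof (rule eq_matI)
  fix r c assume "r < dim_row (1\<^sub>m n :: complex mat)" "c < dim_col (1\<^sub>m n :: complex mat)"
  hence rc: "r < n" "c < n" by auto
  have "(Finv n * Fstar n) $$ (r,c) = (\<Sum>k<n. omega n ^ ((n-1)*r*k) / complex_of_real (sqrt (real n)) *
      (omega n ^ (k*c) / complex_of_real (sqrt (real n))))"
    using rc by (simp add: Fstar_def Finv_def scalar_prod_def lessThan_atLeast0)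
  also have "\<dots> = (\<Sum>k<n. (omega n ^ (c + (n-1)*r)) ^ k / complex_of_real (sqrt (real n)) / complex_of_real (sqrt (real n)))"
    by (rule sum.cong[OF refl]) (subst pw2, simp)
  also have "\<dots> = (if c = r then 1 else 0)"
    by (rule unit_entry[OF assms rc(2,1) refl mod_shift[OF rc(2,1)]])
  finally show "(Finv n * Fstar n) $$ (r,c) = 1\<^sub>m n $$ (r,c)" using rc by auto
qed (auto simp: Fstar_def Finv_def)

lemma A1_carrier: "A1 a1 a2 \<in> carrier_mat 2 2" unfolding A1_def mat_of_rows_list_def by auto
lemma A2_carrier: "A2 a3 \<in> carrier_mat 2 2" unfolding A2_def mat_of_rows_list_def by auto
lemma Dblk_carrier: "Dblk n a1 a2 a3 i \<in> carrier_mat 2 2" unfolding Dblk_def using A1_carrier A2_carrier by auto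
lemma Ahat_carrier: "Ahat n a1 a2 a3 \<in> carrier_mat (2*n) (2*n)" unfolding Ahat_def by auto
lemma BD_carrier: "block_diag2 n D \<in> carrier_mat (2*n) (2*n)" unfolding block_diag2_def by auto

lemma Dblk_entry: "a < 2 \<Longrightarrow> b < 2 \<Longrightarrow> Dblk n a1 a2 a3 i $$ (a,b) = A1 a1 a2 $$ (a,b) + omega n ^ ((n-1)*i) * A2 a3 $$ (a,b)"
  unfolding Dblk_def using A1_carrier[of a1 a2] A2_carrier[of a3] by (simp add: carrier_matD)

lemma omega_prev: assumes "n > 0" "r < n"
  shows "omega n ^ ((if r = 0 then n - 1 else r - 1) * k) = omega n ^ ((n-1)*k) * omega n ^ (r*k)"
proof (cases "r = 0")
  case False
  have "omega n ^ ((n-1)*k) * omega n ^ (r*k) = omega n ^ (n*k + (r-1)*k)"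
    unfolding power_add[symmetric] using False assms by (simp add: algebra_simps)
  also have "\<dots> = (omega n ^ n) ^ k * omega n ^ ((r-1)*k)" by (simp add: power_add power_mult)
  finally show ?thesis using False omega_n[OF assms(1)] by simp
qed simp

lemma Ahat_T: assumes n: "n \<ge> 2"
  shows "Ahat n a1 a2 a3 * kron (Fstar n) (1\<^sub>m 2) = kron (Fstar n) (1\<^sub>m 2) * block_diag2 n (Dblk n a1 a2 a3)"
proof (rule eq_matI)
  let ?F = "Fstar n"
  fix p q assume "p < dim_row (kron ?F (1\<^sub>m 2) * block_diag2 n (Dblk n a1 a2 a3))"
    "q < dim_col (kron ?F (1\<^sub>m 2) * block_diag2 n (Dblk n a1 a2 a3))"
  hence pq: "p < 2*n" "q < 2*n" by (auto simp: kron_def Fstar_def block_diag2_def)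
  define r where "r = p div 2"
  define a where "a = p mod 2"
  define k where "k = q div 2"
  define b where "b = q mod 2"
  define pr where "pr = (if r = 0 then n - 1 else r - 1)"
  have rk: "r < n" "k < n" "a < 2" "b < 2" using pq unfolding r_def k_def a_def b_def by auto
  have rpr: "r \<noteq> pr" "pr < n" using n rk unfolding pr_def by auto
  have blk: "Ahat_block n a1 a2 a3 r c $$ (a,b) * x =
     (if c = r then A1 a1 a2 $$ (a,b) * x else 0) + (if c = pr then A2 a3 $$ (a,b) * x else 0)" if "c < n" for c x
    using rk rpr that unfolding Ahat_block_def pr_def by auto
  have "(Ahat n a1 a2 a3 * kron ?F (1\<^sub>m 2)) $$ (p,q) = (\<Sum>c<n. Ahat n a1 a2 a3 $$ (p, 2*c + b) * ?F $$ (c, k))"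
    unfolding b_def k_def by (rule mult_kron_right[OF Ahat_carrier Fstar_carrier pq])
  also have "\<dots> = (\<Sum>c<n. (if c = r then A1 a1 a2 $$ (a,b) * ?F $$ (c, k) else 0) + (if c = pr then A2 a3 $$ (a,b) * ?F $$ (c, k) else 0))"
  proof (rule sum.cong[OF refl])
    fix c assume "c \<in> {..<n}"
    hence c: "c < n" "2*c+b < 2*n" using rk by auto
    have "Ahat n a1 a2 a3 $$ (p, 2*c + b) = Ahat_block n a1 a2 a3 r c $$ (a,b)"
      using pq c rk unfolding Ahat_def r_def a_def by simp
    thus "Ahat n a1 a2 a3 $$ (p, 2*c + b) * ?F $$ (c, k) = (if c = r then A1 a1 a2 $$ (a,b) * ?F $$ (c, k) else 0) + (if c = pr then A2 a3 $$ (a,b) * ?F $$ (c, k) else 0)"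
      using blk[OF c(1)] by simp
  qed
  also have "\<dots> = A1 a1 a2 $$ (a,b) * ?F $$ (r, k) + A2 a3 $$ (a,b) * ?F $$ (pr, k)"
    using rk rpr by (simp add: sum.distrib)
  also have "\<dots> = ?F $$ (r,k) * Dblk n a1 a2 a3 k $$ (a,b)"
  proof -
    have "?F $$ (pr, k) = omega n ^ ((n-1)*k) * ?F $$ (r,k)"
      using rk rpr omega_prev[of n r k] n unfolding Fstar_def pr_def by auto
    thus ?thesis using Dblk_entry[OF rk(3,4)] by (simp add: algebra_simps)
  qed
  also have "\<dots> = (\<Sum>c<n. ?F $$ (r, c) * block_diag2 n (Dblk n a1 a2 a3) $$ (2*c + a, q))"
  proof -
    have "(\<Sum>c<n. ?F $$ (r, c) * block_diag2 n (Dblk n a1 a2 a3) $$ (2*c + a, q))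
       = (\<Sum>c<n. if c = k then ?F $$ (r,k) * Dblk n a1 a2 a3 k $$ (a,b) else 0)"
    proof (rule sum.cong[OF refl])
      fix c assume "c \<in> {..<n}"
      thus "?F $$ (r, c) * block_diag2 n (Dblk n a1 a2 a3) $$ (2*c + a, q) = (if c = k then ?F $$ (r,k) * Dblk n a1 a2 a3 k $$ (a,b) else 0)"
        using rk pq unfolding block_diag2_def k_def b_def by auto
    qed
    thus ?thesis using rk by simp
  qed
  also have "\<dots> = (kron ?F (1\<^sub>m 2) * block_diag2 n (Dblk n a1 a2 a3)) $$ (p,q)"
    unfolding r_def a_def by (rule mult_kron_left[OF BD_carrier Fstar_carrier pq, symmetric])
  finally show "(Ahat n a1 a2 a3 * kron ?F (1\<^sub>m 2)) $$ (p,q) = (kron ?F (1\<^sub>m 2) * block_diag2 n (Dblk n a1 a2 a3)) $$ (p,q)" .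
next
  show "dim_row (Ahat n a1 a2 a3 * kron (Fstar n) (1\<^sub>m 2)) = dim_row (kron (Fstar n) (1\<^sub>m 2) * block_diag2 n (Dblk n a1 a2 a3))"
    by (simp add: Ahat_def kron_def Fstar_def)
next
  show "dim_col (Ahat n a1 a2 a3 * kron (Fstar n) (1\<^sub>m 2)) = dim_col (kron (Fstar n) (1\<^sub>m 2) * block_diag2 n (Dblk n a1 a2 a3))"
    by (simp add: block_diag2_def kron_def Fstar_def)
qed

lemma mv_block: fixes D :: "nat \<Rightarrow> complex mat"
  assumes v: "v \<in> carrier_vec (2*n)" and p: "p < 2*n"
  shows "(block_diag2 n D *\<^sub>v v) $ p = D (p div 2) $$ (p mod 2, 0) * v $ (2*(p div 2))
      + D (p div 2) $$ (p mod 2, 1) * v $ (2*(p div 2)+1)"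
proof -
  let ?B = "block_diag2 n D"
  define r where "r = p div 2"
  define a where "a = p mod 2"
  have r: "r < n" using p unfolding r_def by auto
  have "(?B *\<^sub>v v) $ p = (\<Sum>s = 0..<2*n. ?B $$ (p,s) * v $ s)"
    using v p by (simp add: BD_carrier[of n D, THEN carrier_matD(1)] scalar_prod_def block_diag2_def)
  also have "\<dots> = (\<Sum>c<n. ?B $$ (p,2*c) * v $ (2*c) + ?B $$ (p,2*c+1) * v $ (2*c+1))"
    by (rule sum_split2)
  also have "\<dots> = (\<Sum>c<n. if c = r then D r $$ (a, 0) * v $ (2*r) + D r $$ (a, 1) * v $ (2*r+1) else 0)"
  proof (rule sum.cong[OF refl])
    fix c assume "c \<in> {..<n}"
    hence c: "2*c < 2*n" "2*c+1 < 2*n" by auto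
    have e0: "?B $$ (p,2*c) = (if r = c then D r $$ (a, 0) else 0)"
      using c p unfolding block_diag2_def r_def a_def by simp
    have e1: "?B $$ (p,2*c+1) = (if r = c then D r $$ (a, 1) else 0)"
      using c p unfolding block_diag2_def r_def a_def by simp
    show "?B $$ (p,2*c) * v $ (2*c) + ?B $$ (p,2*c+1) * v $ (2*c+1) =
      (if c = r then D r $$ (a, 0) * v $ (2*r) + D r $$ (a, 1) * v $ (2*r+1) else 0)"
      unfolding e0 e1 by auto
  qed
  also have "\<dots> = D r $$ (a, 0) * v $ (2*r) + D r $$ (a, 1) * v $ (2*r+1)" using r by simp
  finally show ?thesis unfolding r_def a_def .
qed

lemma mv2: fixes M :: "complex mat" assumes "M \<in> carrier_mat 2 2" "u \<in> carrier_vec 2" "a < 2"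
  shows "(M *\<^sub>v u) $ a = M $$ (a,0) * u $ 0 + M $$ (a,1) * u $ 1"
  using assms by (simp add: scalar_prod_def numeral_2_eq_2)

lemma vec2_eq: "u \<in> carrier_vec 2 \<Longrightarrow> w \<in> carrier_vec 2 \<Longrightarrow> u $ 0 = w $ 0 \<Longrightarrow> u $ 1 = w $ 1 \<Longrightarrow> u = w"
  by (rule eq_vecI) (auto simp: numeral_2_eq_2 less_Suc_eq)

lemma eig_block: fixes D :: "nat \<Rightarrow> complex mat"
  assumes D: "\<And>c. D c \<in> carrier_mat 2 2"
  shows "eigenvalue (block_diag2 n D) z \<longleftrightarrow> (\<exists>i<n. eigenvalue (D i) z)"
proof
  assume "eigenvalue (block_diag2 n D) z"
  then obtain v where v: "v \<in> carrier_vec (2*n)" "v \<noteq> 0\<^sub>v (2*n)" "block_diag2 n D *\<^sub>v v = z \<cdot>\<^sub>v v"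
    unfolding eigenvalue_def eigenvector_def by (auto simp: block_diag2_def)
  have "\<exists>p<2*n. v $ p \<noteq> 0"
  proof (rule ccontr)
    assume "\<not> ?thesis"
    hence "v = 0\<^sub>v (2*n)" by (intro eq_vecI) (use v(1) in auto)
    thus False using v(2) by simp
  qed
  then obtain p where p: "p < 2*n" "v $ p \<noteq> 0" by blast
  define i where "i = p div 2"
  have i: "i < n" using p unfolding i_def by auto
  define u where "u = vec 2 (\<lambda>b. v $ (2*i+b))"
  have u: "u \<in> carrier_vec 2" unfolding u_def by simp
  have "u $ (p mod 2) = v $ p" unfolding u_def i_def by simp
  hence u0: "u \<noteq> 0\<^sub>v 2" using p(2) by auto
  have "D i *\<^sub>v u = z \<cdot>\<^sub>v u"
  proof (rule eq_vecI)
    fix a assume "a < dim_vec (z \<cdot>\<^sub>v u)"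
    hence a: "a < 2" using u by simp
    have pa: "2*i + a < 2*n" using i a by simp
    have "(block_diag2 n D *\<^sub>v v) $ (2*i+a) = (z \<cdot>\<^sub>v v) $ (2*i+a)" using v(3) by simp
    hence "D i $$ (a, 0) * v $ (2*i) + D i $$ (a, 1) * v $ (2*i+1) = z * v $ (2*i+a)"
      using mv_block[OF v(1) pa] pa v(1) a by simp
    thus "(D i *\<^sub>v u) $ a = (z \<cdot>\<^sub>v u) $ a"
      using mv2[OF D u a] a unfolding u_def by simp
  qed (use D[of i] u in auto)
  hence "eigenvalue (D i) z" unfolding eigenvalue_def eigenvector_def using D[of i] u u0 by auto
  thus "\<exists>i<n. eigenvalue (D i) z" using i by auto
next
  assume "\<exists>i<n. eigenvalue (D i) z"
  then obtain i u where i: "i < n" and u: "u \<in> carrier_vec 2" "u \<noteq> 0\<^sub>v 2" "D i *\<^sub>v u = z \<cdot>\<^sub>v u"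
    unfolding eigenvalue_def eigenvector_def using D[THEN carrier_matD(1)] by auto
  define v where "v = vec (2*n) (\<lambda>s. if s div 2 = i then u $ (s mod 2) else 0)"
  have v: "v \<in> carrier_vec (2*n)" unfolding v_def by simp
  have "\<exists>b<2. u $ b \<noteq> 0"
  proof (rule ccontr)
    assume "\<not> ?thesis"
    hence "u = 0\<^sub>v 2" by (intro eq_vecI) (use u(1) in auto)
    thus False using u(2) by simp
  qed
  then obtain b where b: "b < 2" "u $ b \<noteq> 0" by blast
  have "v $ (2*i+b) = u $ b" using i b unfolding v_def by simp
  moreover have "2*i+b < 2*n" using i b by linarith
  ultimately have v0: "v \<noteq> 0\<^sub>v (2*n)" using b by auto
  have "block_diag2 n D *\<^sub>v v = z \<cdot>\<^sub>v v"
  proof (rule eq_vecI)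
    fix p assume "p < dim_vec (z \<cdot>\<^sub>v v)"
    hence p: "p < 2*n" using v by simp
    have "(block_diag2 n D *\<^sub>v v) $ p = D (p div 2) $$ (p mod 2, 0) * v $ (2*(p div 2))
      + D (p div 2) $$ (p mod 2, 1) * v $ (2*(p div 2)+1)" by (rule mv_block[OF v p])
    also have "\<dots> = (z \<cdot>\<^sub>v v) $ p"
    proof (cases "p div 2 = i")
      case True
      have "D i $$ (p mod 2, 0) * u $ 0 + D i $$ (p mod 2, 1) * u $ 1 = z * u $ (p mod 2)"
        using mv2[OF D[of i] u(1), of "p mod 2"] u by simp
      moreover have "2*(p div 2) < 2*n" "2*(p div 2)+1 < 2*n" using p less_mult_imp_div_less[of p n 2] by (auto simp: mult.commute)
      ultimately show ?thesis using True p unfolding v_def by simp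
    next
      case False
      moreover have "2*(p div 2) < 2*n" "2*(p div 2)+1 < 2*n" using p less_mult_imp_div_less[of p n 2] by (auto simp: mult.commute)
      ultimately show ?thesis using p unfolding v_def by simp
    qed
    finally show "(block_diag2 n D *\<^sub>v v) $ p = (z \<cdot>\<^sub>v v) $ p" .
  qed (auto simp: v_def block_diag2_def)
  thus "eigenvalue (block_diag2 n D) z" unfolding eigenvalue_def eigenvector_def
    using v v0 by (auto simp: block_diag2_def)
qed

lemma eig2: fixes M :: "complex mat"
  assumes M: "M \<in> carrier_mat 2 2" and e: "M $$ (0,0) = 0" "M $$ (0,1) = \<beta>" "M $$ (1,0) = \<alpha>" "M $$ (1,1) = \<delta>"
    and al: "\<alpha> \<noteq> 0"
  shows "eigenvalue M z \<longleftrightarrow> z^2 - \<delta>*z - \<alpha>*\<beta> = 0"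
proof
  assume "eigenvalue M z"
  then obtain u where u: "u \<in> carrier_vec 2" "u \<noteq> 0\<^sub>v 2" "M *\<^sub>v u = z \<cdot>\<^sub>v u"
    unfolding eigenvalue_def eigenvector_def using M by auto
  define x where "x = u $ 0"
  define y where "y = u $ 1"
  have r0: "\<beta> * y = z * x" using mv2[OF M u(1), of 0] u e unfolding x_def y_def by simp
  have r1: "\<alpha> * x + \<delta> * y = z * y" using mv2[OF M u(1), of 1] u e unfolding x_def y_def by simp
  have "y \<noteq> 0"
  proof
    assume y0: "y = 0"
    hence "\<alpha> * x = 0" using r0 r1 by simp
    hence "x = 0" using al by simp
    hence "u = 0\<^sub>v 2" using y0 u(1) unfolding x_def y_def by (intro vec2_eq) auto
    thus False using u(2) by simp
  qed
  moreover have "y * (z^2 - \<delta>*z - \<alpha>*\<beta>) = 0"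
  proof -
    have "y * (z^2 - \<delta>*z - \<alpha>*\<beta>) = z*(z*y) - \<delta>*z*y - \<alpha>*(\<beta>*y)"
      by (simp add: algebra_simps power2_eq_square)
    also have "\<dots> = z*(\<alpha>*x + \<delta>*y) - \<delta>*z*y - \<alpha>*(z*x)" using r0 r1 by simp
    also have "\<dots> = 0" by (simp add: algebra_simps)
    finally show ?thesis .
  qed
  ultimately show "z^2 - \<delta>*z - \<alpha>*\<beta> = 0" by simp
next
  assume q: "z^2 - \<delta>*z - \<alpha>*\<beta> = 0"
  define u where "u = (if \<beta> = 0 \<and> z = 0 then vec 2 (\<lambda>i. if i = 0 then \<delta> else - \<alpha>)
     else vec 2 (\<lambda>i. if i = 0 then \<beta> else z))"
  have u: "u \<in> carrier_vec 2" unfolding u_def by simp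
  have u0: "u \<noteq> 0\<^sub>v 2"
  proof
    assume "u = 0\<^sub>v 2"
    hence "u $ 0 = 0" "u $ 1 = 0" by auto
    thus False using al unfolding u_def by (auto split: if_splits)
  qed
  have "M *\<^sub>v u = z \<cdot>\<^sub>v u"
  proof (rule vec2_eq)
    show "(M *\<^sub>v u) $ 0 = (z \<cdot>\<^sub>v u) $ 0"
      using mv2[OF M u, of 0] e u unfolding u_def by (auto simp: algebra_simps)
    have "z^2 = \<delta>*z + \<alpha>*\<beta>" using q by (simp add: algebra_simps)
    thus "(M *\<^sub>v u) $ 1 = (z \<cdot>\<^sub>v u) $ 1"
      using mv2[OF M u, of 1] e u unfolding u_def by (auto simp: algebra_simps power2_eq_square)
  qed (use M u in auto)
  thus "eigenvalue M z" unfolding eigenvalue_def eigenvector_def using M u u0 by auto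
qed

lemma Dblk_entries:
  "Dblk n a1 a2 a3 i $$ (0,0) = 0"
  "Dblk n a1 a2 a3 i $$ (0,1) = -1 + omega n ^ ((n-1)*i)"
  "Dblk n a1 a2 a3 i $$ (1,0) = of_real a1"
  "Dblk n a1 a2 a3 i $$ (1,1) = - of_real a2 + of_real a3 * omega n ^ ((n-1)*i)"
  by (simp_all add: Dblk_entry A1_def A2_def mat_of_rows_list_def)

lemma eigD: assumes "a1 \<noteq> 0"
  shows "eigenvalue (Dblk n a1 a2 a3 i) z \<longleftrightarrow>
    z^2 + (of_real a2 - of_real a3 * omega n ^ ((n-1)*i)) * z + of_real a1 * (1 - omega n ^ ((n-1)*i)) = 0"
proof -
  have "eigenvalue (Dblk n a1 a2 a3 i) z \<longleftrightarrow>
     z^2 - (- of_real a2 + of_real a3 * omega n ^ ((n-1)*i))*z - of_real a1 * (-1 + omega n ^ ((n-1)*i)) = 0"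
    by (rule eig2[OF Dblk_carrier Dblk_entries]) (use assms in simp)
  also have "z^2 - (- of_real a2 + of_real a3 * omega n ^ ((n-1)*i))*z - of_real a1 * (-1 + omega n ^ ((n-1)*i))
    = z^2 + (of_real a2 - of_real a3 * omega n ^ ((n-1)*i)) * z + of_real a1 * (1 - omega n ^ ((n-1)*i))"
    by (simp add: algebra_simps)
  finally show ?thesis .
qed

lemma w_inv: assumes "n > 0" shows "omega n ^ ((n-1)*i) * omega n ^ i = 1"
proof -
  have "omega n ^ ((n-1)*i) * omega n ^ i = omega n ^ ((n-1)*i + i)" by (simp add: power_add)
  also have "(n-1)*i + i = n*i" using assms by (cases n) (auto simp: algebra_simps)
  also have "omega n ^ (n*i) = 1" by (simp add: power_mult omega_n[OF assms])
  finally show ?thesis .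
qed

lemma w_lt: assumes "i < k" "k < n" and eq: "omega n ^ ((n-1)*i) = omega n ^ ((n-1)*k)"
  shows False
proof -
  have n: "n > 0" using assms by auto
  have "omega n \<noteq> 0" unfolding omega_def by simp
  hence oi: "omega n ^ i \<noteq> 0" by simp
  have "omega n ^ i = omega n ^ i * (omega n ^ ((n-1)*k) * omega n ^ k)" using w_inv[OF n, of k] by simp
  also have "\<dots> = (omega n ^ ((n-1)*i) * omega n ^ i) * omega n ^ k" using eq by (simp add: ac_simps)
  also have "\<dots> = omega n ^ k" using w_inv[OF n, of i] by simp
  also have "\<dots> = omega n ^ i * omega n ^ (k - i)" using assms by (simp flip: power_add)
  finally have "omega n ^ i * 1 = omega n ^ i * omega n ^ (k - i)" by simp
  hence "omega n ^ (k - i) = 1" using oi by (metis mult_left_cancel)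
  thus False using omega_ne1[of "k - i" n] assms by simp
qed

lemma w_distinct: assumes "i < n" "k < n" "i \<noteq> k"
  shows "omega n ^ ((n-1)*i) \<noteq> omega n ^ ((n-1)*k)"
  using w_lt[of i k n] w_lt[of k i n] assms by (metis linorder_neqE_nat)

lemma T_inv: assumes "n > 0"
  shows "kron (Finv n) (1\<^sub>m 2) * kron (Fstar n) (1\<^sub>m 2) = 1\<^sub>m (2*n)"
    "kron (Fstar n) (1\<^sub>m 2) * kron (Finv n) (1\<^sub>m 2) = 1\<^sub>m (2*n)"
  by (simp_all add: kron_mult[OF Finv_carrier Fstar_carrier] kron_mult[OF Fstar_carrier Finv_carrier]
      Finv_Fstar[OF assms] Fstar_Finv[OF assms] kron_one)

lemma dimT: "dim_row (kron (Finv n) (1\<^sub>m 2)) = 2*n" "dim_row (kron (Fstar n) (1\<^sub>m 2)) = 2*n"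
  using kron_carrier[OF Finv_carrier, of n] kron_carrier[OF Fstar_carrier, of n] by auto

lemma part1: assumes n: "n \<ge> 2"
  shows "\<exists>Tinv. inverts_mat Tinv (kron (Fstar n) (1\<^sub>m 2))
              \<and> inverts_mat (kron (Fstar n) (1\<^sub>m 2)) Tinv
              \<and> Tinv * Ahat n a1 a2 a3 * kron (Fstar n) (1\<^sub>m 2) = block_diag2 n (Dblk n a1 a2 a3)"
proof (intro exI conjI)
  let ?T = "kron (Fstar n) (1\<^sub>m 2)" and ?Ti = "kron (Finv n) (1\<^sub>m 2)"
  have n0: "n > 0" using n by simp
  have cT: "?T \<in> carrier_mat (2*n) (2*n)" "?Ti \<in> carrier_mat (2*n) (2*n)"
    using kron_carrier[OF Finv_carrier, of n] kron_carrier[OF Fstar_carrier, of n] by auto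
  show "inverts_mat ?Ti ?T" unfolding inverts_mat_def dimT T_inv[OF n0] ..
  show "inverts_mat ?T ?Ti" unfolding inverts_mat_def dimT T_inv[OF n0] ..
  have "?Ti * Ahat n a1 a2 a3 * ?T = ?Ti * (Ahat n a1 a2 a3 * ?T)"
    by (rule assoc_mult_mat[OF cT(2) Ahat_carrier cT(1)])
  also have "\<dots> = ?Ti * (?T * block_diag2 n (Dblk n a1 a2 a3))" unfolding Ahat_T[OF n] ..
  also have "\<dots> = (?Ti * ?T) * block_diag2 n (Dblk n a1 a2 a3)"
    by (rule assoc_mult_mat[OF cT(2) cT(1) BD_carrier, symmetric])
  also have "\<dots> = block_diag2 n (Dblk n a1 a2 a3)" unfolding T_inv[OF n0] using BD_carrier[of n "Dblk n a1 a2 a3"] by simp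
  finally show "?Ti * Ahat n a1 a2 a3 * ?T = block_diag2 n (Dblk n a1 a2 a3)" .
qed

lemma similar_Ahat: assumes n: "n \<ge> 2"
  shows "similar_mat (Ahat n a1 a2 a3) (block_diag2 n (Dblk n a1 a2 a3))"
proof -
  let ?T = "kron (Fstar n) (1\<^sub>m 2)" and ?Ti = "kron (Finv n) (1\<^sub>m 2)" and ?B = "block_diag2 n (Dblk n a1 a2 a3)"
    and ?A = "Ahat n a1 a2 a3"
  have n0: "n > 0" using n by simp
  have cT: "?T \<in> carrier_mat (2*n) (2*n)" "?Ti \<in> carrier_mat (2*n) (2*n)"
    using kron_carrier[OF Finv_carrier, of n] kron_carrier[OF Fstar_carrier, of n] by auto
  have "?A = ?A * (?T * ?Ti)" unfolding T_inv[OF n0] using Ahat_carrier[of n a1 a2 a3] by simp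
  also have "\<dots> = (?A * ?T) * ?Ti" by (rule assoc_mult_mat[OF Ahat_carrier cT, symmetric])
  also have "\<dots> = ?T * ?B * ?Ti" unfolding Ahat_T[OF n] ..
  finally have eq: "?A = ?T * ?B * ?Ti" .
  show ?thesis unfolding similar_mat_def similar_mat_wit_def Let_def
    by (rule exI[of _ ?T], rule exI[of _ ?Ti]) (use cT Ahat_carrier[of n a1 a2 a3] BD_carrier[of n] T_inv[OF n0] eq in auto)
qed

lemma part4: assumes a1: "a1 > 0" and a3: "a3 > 0" and c: "a1 - a2 * a3 + a3^2 \<noteq> 0"
  and ik: "i < n" "k < n" "i \<noteq> k"
  shows "\<not> (\<exists>z. eigenvalue (Dblk n a1 a2 a3 i) z \<and> eigenvalue (Dblk n a1 a2 a3 k) z)"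
proof
  assume "\<exists>z. eigenvalue (Dblk n a1 a2 a3 i) z \<and> eigenvalue (Dblk n a1 a2 a3 k) z"
  then obtain z where "eigenvalue (Dblk n a1 a2 a3 i) z" "eigenvalue (Dblk n a1 a2 a3 k) z" by blast
  define wi where "wi = omega n ^ ((n-1)*i)"
  define wk where "wk = omega n ^ ((n-1)*k)"
  define A1' where "A1' = complex_of_real a1"
  define A2' where "A2' = complex_of_real a2"
  define A3' where "A3' = complex_of_real a3"
  have qi: "z^2 + (A2' - A3' * wi) * z + A1' * (1 - wi) = 0"
    using \<open>eigenvalue (Dblk n a1 a2 a3 i) z\<close> eigD[of a1 n a2 a3 i z] a1 unfolding wi_def A1'_def A2'_def A3'_def by simp
  have qk: "z^2 + (A2' - A3' * wk) * z + A1' * (1 - wk) = 0"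
    using \<open>eigenvalue (Dblk n a1 a2 a3 k) z\<close> eigD[of a1 n a2 a3 k z] a1 unfolding wk_def A1'_def A2'_def A3'_def by simp
  have "(wk - wi) * (A3' * z + A1') = (z^2 + (A2' - A3' * wi) * z + A1' * (1 - wi)) - (z^2 + (A2' - A3' * wk) * z + A1' * (1 - wk))"
    by (simp add: algebra_simps)
  also have "\<dots> = 0" using qi qk by simp
  finally have "(wk - wi) * (A3' * z + A1') = 0" .
  moreover have "wk - wi \<noteq> 0" using w_distinct[OF ik] unfolding wi_def wk_def by simp
  ultimately have h: "A3' * z = - A1'" by (simp add: add_eq_0_iff)
  have "A3'^2 * (z^2 + (A2' - A3' * wi) * z + A1' * (1 - wi)) = (A3'*z)^2 + (A2' - A3' * wi) * A3' * (A3' * z) + A1' * (1 - wi) * A3'^2"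
    by (simp add: algebra_simps power2_eq_square)
  also have "\<dots> = A1' * (A1' - A2' * A3' + A3'^2)" unfolding h by (simp add: algebra_simps power2_eq_square)
  finally have "A1' * (A1' - A2' * A3' + A3'^2) = 0" using qi by simp
  hence "complex_of_real (a1 * (a1 - a2 * a3 + a3^2)) = 0" unfolding A1'_def A2'_def A3'_def by simp
  hence "a1 * (a1 - a2 * a3 + a3^2) = 0" by (simp only: of_real_eq_0_iff)
  thus False using a1 c by simp
qed

theorem mainTheorem3:
  fixes n :: nat and a1 a2 a3 :: real
  assumes "n \<ge> 2" and "a1 > 0" and "a2 > a3" and "a3 > 0"
  shows "(\<exists>Tinv. inverts_mat Tinv (kron (Fstar n) (1\<^sub>m 2))
              \<and> inverts_mat (kron (Fstar n) (1\<^sub>m 2)) Tinv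
              \<and> Tinv * Ahat n a1 a2 a3 * kron (Fstar n) (1\<^sub>m 2) = block_diag2 n (Dblk n a1 a2 a3))
    \<and> (\<forall>i<n. Dblk n a1 a2 a3 i =
           mat_of_rows_list 2 [[0, -1 + omega n ^ ((n-1)*i)],
                               [of_real a1, - of_real a2 + of_real a3 * omega n ^ ((n-1)*i)]])
    \<and> (\<forall>z::complex. eigenvalue (Ahat n a1 a2 a3) z \<longleftrightarrow>
           (\<exists>i<n. z^2 + (of_real a2 - of_real a3 * omega n ^ ((n-1)*i)) * z
                   + of_real a1 * (1 - omega n ^ ((n-1)*i)) = 0))
    \<and> (a1 - a2 * a3 + a3^2 \<noteq> 0 \<longrightarrow>
         (\<forall>i<n. \<forall>k<n. i \<noteq> k \<longrightarrow>
            \<not> (\<exists>z. eigenvalue (Dblk n a1 a2 a3 i) z \<and> eigenvalue (Dblk n a1 a2 a3 k) z)))"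
proof (intro conjI)
  show "\<exists>Tinv. inverts_mat Tinv (kron (Fstar n) (1\<^sub>m 2))
              \<and> inverts_mat (kron (Fstar n) (1\<^sub>m 2)) Tinv
              \<and> Tinv * Ahat n a1 a2 a3 * kron (Fstar n) (1\<^sub>m 2) = block_diag2 n (Dblk n a1 a2 a3)"
    by (rule part1[OF assms(1)])
next
  show "\<forall>i<n. Dblk n a1 a2 a3 i =
           mat_of_rows_list 2 [[0, -1 + omega n ^ ((n-1)*i)],
                               [of_real a1, - of_real a2 + of_real a3 * omega n ^ ((n-1)*i)]]"
  proof (intro allI impI)
    fix i assume "i < n"
    show "Dblk n a1 a2 a3 i =
           mat_of_rows_list 2 [[0, -1 + omega n ^ ((n-1)*i)],
                               [of_real a1, - of_real a2 + of_real a3 * omega n ^ ((n-1)*i)]]"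
    proof (rule eq_matI)
      fix a b assume "a < dim_row (mat_of_rows_list 2 [[0, -1 + omega n ^ ((n-1)*i)],
                               [of_real a1, - of_real a2 + of_real a3 * omega n ^ ((n-1)*i)]] :: complex mat)"
        "b < dim_col (mat_of_rows_list 2 [[0, -1 + omega n ^ ((n-1)*i)],
                               [of_real a1, - of_real a2 + of_real a3 * omega n ^ ((n-1)*i)]] :: complex mat)"
      hence "a = 0 \<or> a = 1" "b = 0 \<or> b = 1" by (auto simp: mat_of_rows_list_def)
      thus "Dblk n a1 a2 a3 i $$ (a, b) = mat_of_rows_list 2 [[0, -1 + omega n ^ ((n-1)*i)],
                               [of_real a1, - of_real a2 + of_real a3 * omega n ^ ((n-1)*i)]] $$ (a, b)"
        by (elim disjE) (simp_all add: Dblk_entries[unfolded One_nat_def] mat_of_rows_list_def)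
    qed (use Dblk_carrier[of n a1 a2 a3 i] in \<open>auto simp: mat_of_rows_list_def\<close>)
  qed
next
  show "\<forall>z::complex. eigenvalue (Ahat n a1 a2 a3) z \<longleftrightarrow>
           (\<exists>i<n. z^2 + (of_real a2 - of_real a3 * omega n ^ ((n-1)*i)) * z
                   + of_real a1 * (1 - omega n ^ ((n-1)*i)) = 0)"
  proof
    fix z :: complex
    have "eigenvalue (Ahat n a1 a2 a3) z \<longleftrightarrow> eigenvalue (block_diag2 n (Dblk n a1 a2 a3)) z"
      unfolding eigenvalue_root_char_poly[OF Ahat_carrier] eigenvalue_root_char_poly[OF BD_carrier]
        char_poly_similar[OF similar_Ahat[OF assms(1)]] ..
    also have "\<dots> \<longleftrightarrow> (\<exists>i<n. eigenvalue (Dblk n a1 a2 a3 i) z)"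
      by (rule eig_block[OF Dblk_carrier])
    also have "\<dots> \<longleftrightarrow> (\<exists>i<n. z^2 + (of_real a2 - of_real a3 * omega n ^ ((n-1)*i)) * z
                   + of_real a1 * (1 - omega n ^ ((n-1)*i)) = 0)"
      using eigD[of a1] assms(2) by simp
    finally show "eigenvalue (Ahat n a1 a2 a3) z \<longleftrightarrow>
           (\<exists>i<n. z^2 + (of_real a2 - of_real a3 * omega n ^ ((n-1)*i)) * z
                   + of_real a1 * (1 - omega n ^ ((n-1)*i)) = 0)" .
  qed
next
  show "a1 - a2 * a3 + a3^2 \<noteq> 0 \<longrightarrow>
         (\<forall>i<n. \<forall>k<n. i \<noteq> k \<longrightarrow>
            \<not> (\<exists>z. eigenvalue (Dblk n a1 a2 a3 i) z \<and> eigenvalue (Dblk n a1 a2 a3 k) z))"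
    using part4[OF assms(2) assms(4)] by blast
qed
end
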